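(* Let $P\subset\mathbb R^n$ be a bounded open convex set and let $\phi\in L^1(P)$ be convex. Suppose there exists $y\in\overline P$ such that $$P^\phi_a:=\{x\in P:\phi(x)<a\}=\frac{1-an}{1+n}\,y+\frac{na+n}{1+n}\,P\qquad\text{for every } -1<a<\tfrac1n .$$ Then $\int_P\phi\,d\mu=0$ and $\phi\in\mathcal W(P)$.
   Context: $\mu$ denotes Lebesgue measure on $\mathbb R^n$. A convex function $f:P\to\mathbb R$ is identified with its lower semicontinuous extension $f:\overline P\to(-\infty,\infty]$, which is convex. The set of extremizers is $$\mathcal W(P):=\Big\{\psi:P\to\mathbb R\text{ convex}:\ \int_P\psi\,d\mu=0,\ -\frac{2}{n+1}\Big(\frac{n}{n+1}\Big)^n\inf_P\psi=\frac{1}{\mu(P)}\int_P|\psi|\,d\mu\Big\}.$$ For sets $A\subset\mathbb R^n$, $y\in\mathbb R^n$ and scalars $s,r$, $s\,y+rA=\{sy+ra:a\in A\}$. *)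

theory Defs
  imports "HOL-Analysis.Analysis"
begin

text \<open>Here n = DIM('a), mu = Lebesgue measure,
  integrals over P are Lebesgue integrals (absolutely integrable functions,
  Henstock-Kurzweil integral coincides), and inf_P psi = Inf (psi ` P).\<close>
definition extremizers :: "'a::euclidean_space set \<Rightarrow> ('a \<Rightarrow> real) set" where
  "extremizers P = {\<psi>. convex_on P \<psi> \<and> \<psi> absolutely_integrable_on P \<and>
      integral P \<psi> = 0 \<and>
      - (2 / (real DIM('a) + 1)) * (real DIM('a) / (real DIM('a) + 1)) ^ DIM('a) * Inf (\<psi> ` P)
        = (1 / measure lebesgue P) * integral P (\<lambda>x. \<bar>\<psi> x\<bar>)}"

end

theory Submission
  imports Defs
begin


lemma layer_le:
  fixes f :: "'a::euclidean_space \<Rightarrow> real"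
  assumes fm[measurable]: "f \<in> borel_measurable borel" and nn: "\<And>x. 0 \<le> f x"
  shows "(\<integral>\<^sup>+x. ennreal (f x) \<partial>lborel) =
    (\<integral>\<^sup>+t. emeasure lborel {x. t \<le> f x} * indicator {0<..} t \<partial>(lborel::real measure))"
proof -
  have PS: "pair_sigma_finite (lborel::'a measure) (lborel::real measure)"
    by (simp add: pair_sigma_finite_def sigma_finite_lborel)
  have "(\<integral>\<^sup>+x. ennreal (f x) \<partial>lborel) = (\<integral>\<^sup>+x. (\<integral>\<^sup>+t. indicator {0<..f x} t \<partial>(lborel::real measure)) \<partial>lborel)"
    using nn by (intro nn_integral_cong) simp
  also have "\<dots> = (\<integral>\<^sup>+t. (\<integral>\<^sup>+x. indicator {0<..f x} t \<partial>lborel) \<partial>(lborel::real measure))"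
  proof (rule pair_sigma_finite.Fubini'[OF PS, symmetric])
    have "case_prod (\<lambda>x t. indicator {0<..f x} t :: ennreal) = indicator {p. 0 < snd p \<and> snd p \<le> f (fst p)}"
      by (auto simp: fun_eq_iff indicator_def)
    moreover have "{p \<in> space (lborel \<Otimes>\<^sub>M (lborel::real measure)). 0 < snd p \<and> snd p \<le> f (fst p)} \<in> sets (lborel \<Otimes>\<^sub>M (lborel::real measure))"
      by measurable
    moreover have "{p \<in> space (lborel \<Otimes>\<^sub>M (lborel::real measure)). 0 < snd p \<and> snd p \<le> f (fst p)} = {p. 0 < snd p \<and> snd p \<le> f (fst p)}"
      by (simp add: space_pair_measure)
    ultimately show "case_prod (\<lambda>x t. indicator {0<..f x} t :: ennreal) \<in> borel_measurable (lborel \<Otimes>\<^sub>M lborel)"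
      by simp
  qed
  also have "\<dots> = (\<integral>\<^sup>+t. emeasure lborel {x. t \<le> f x} * indicator {0<..} t \<partial>(lborel::real measure))"
  proof (rule nn_integral_cong)
    fix t :: real
    have "(\<integral>\<^sup>+x. indicator {0<..f x} t \<partial>lborel) = (\<integral>\<^sup>+x. indicator {x. t \<le> f x} x * indicator {0<..} t \<partial>lborel)"
      by (intro nn_integral_cong) (auto simp: indicator_def)
    also have "\<dots> = emeasure lborel {x. t \<le> f x} * indicator {0<..} t"
      by (subst nn_integral_multc) auto
    finally show "(\<integral>\<^sup>+x. indicator {0<..f x} t \<partial>lborel) = emeasure lborel {x. t \<le> f x} * indicator {0<..} t" .
  qed
  finally show ?thesis .
qed

lemma layer_lt:
  fixes f :: "'a::euclidean_space \<Rightarrow> real"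
  assumes fm[measurable]: "f \<in> borel_measurable borel" and nn: "\<And>x. 0 \<le> f x"
  shows "(\<integral>\<^sup>+x. ennreal (f x) \<partial>lborel) =
    (\<integral>\<^sup>+t. emeasure lborel {x. t < f x} * indicator {0<..} t \<partial>(lborel::real measure))"
proof -
  have PS: "pair_sigma_finite (lborel::'a measure) (lborel::real measure)"
    by (simp add: pair_sigma_finite_def sigma_finite_lborel)
  have "(\<integral>\<^sup>+x. ennreal (f x) \<partial>lborel) = (\<integral>\<^sup>+x. (\<integral>\<^sup>+t. indicator {0<..<f x} t \<partial>(lborel::real measure)) \<partial>lborel)"
    using nn by (intro nn_integral_cong) simp
  also have "\<dots> = (\<integral>\<^sup>+t. (\<integral>\<^sup>+x. indicator {0<..<f x} t \<partial>lborel) \<partial>(lborel::real measure))"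
  proof (rule pair_sigma_finite.Fubini'[OF PS, symmetric])
    have "case_prod (\<lambda>x t. indicator {0<..<f x} t :: ennreal) = indicator {p. 0 < snd p \<and> snd p < f (fst p)}"
      by (auto simp: fun_eq_iff indicator_def)
    moreover have "{p \<in> space (lborel \<Otimes>\<^sub>M (lborel::real measure)). 0 < snd p \<and> snd p < f (fst p)} \<in> sets (lborel \<Otimes>\<^sub>M (lborel::real measure))"
      by measurable
    moreover have "{p \<in> space (lborel \<Otimes>\<^sub>M (lborel::real measure)). 0 < snd p \<and> snd p < f (fst p)} = {p. 0 < snd p \<and> snd p < f (fst p)}"
      by (simp add: space_pair_measure)
    ultimately show "case_prod (\<lambda>x t. indicator {0<..<f x} t :: ennreal) \<in> borel_measurable (lborel \<Otimes>\<^sub>M lborel)"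
      by simp
  qed
  also have "\<dots> = (\<integral>\<^sup>+t. emeasure lborel {x. t < f x} * indicator {0<..} t \<partial>(lborel::real measure))"
  proof (rule nn_integral_cong)
    fix t :: real
    have "(\<integral>\<^sup>+x. indicator {0<..<f x} t \<partial>lborel) = (\<integral>\<^sup>+x. indicator {x. t < f x} x * indicator {0<..} t \<partial>lborel)"
      by (intro nn_integral_cong) (auto simp: indicator_def)
    also have "\<dots> = emeasure lborel {x. t < f x} * indicator {0<..} t"
      by (subst nn_integral_multc) auto
    finally show "(\<integral>\<^sup>+x. indicator {0<..<f x} t \<partial>lborel) = emeasure lborel {x. t < f x} * indicator {0<..} t" .
  qed
  finally show ?thesis .
qed


lemma lborel_emeasure_fin:
  fixes A :: "'a::euclidean_space set"
  assumes "A \<in> sets borel" "bounded A"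
  shows "emeasure lborel A = ennreal (measure lebesgue A)"
proof -
  have "measure lebesgue A = measure lborel A" using assms by simp
  moreover have "emeasure lborel A = ennreal (measure lborel A)"
    using emeasure_bounded_finite[OF assms(2)] by (simp add: emeasure_eq_ennreal_measure)
  ultimately show ?thesis by simp
qed

lemma poly_int1:
  fixes N m :: real and n :: nat
  assumes N: "N = real n" "n \<ge> 1"
  shows "((\<lambda>t. m - (N*t/(N+1))^n * m) has_integral m) {0..(N+1)/N}"
proof -
  define K where "K = (N/(N+1))^n"
  define F where "F t = m * t - (m * K / (N+1)) * t^(Suc n)" for t
  have Npos: "N > 0" using N by simp
  have d: "(F has_vector_derivative (m - (N*t/(N+1))^n * m)) (at t within {0..(N+1)/N})" for t
  proof -
    have p: "((\<lambda>t. t^(Suc n)) has_real_derivative real (Suc n) * t^n) (at t within {0..(N+1)/N})"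
      using DERIV_pow[of "Suc n" t "{0..(N+1)/N}"] by simp
    have D: "(F has_real_derivative m * 1 - (m * K / (N+1)) * (real (Suc n) * t^n)) (at t within {0..(N+1)/N})"
      unfolding F_def by (intro DERIV_diff DERIV_cmult DERIV_ident p)
    have e1: "(N*t/(N+1))^n = K * t^n"
      by (simp add: K_def power_divide power_mult_distrib)
    have e2: "real (Suc n) = N + 1" using N by simp
    have EQ: "m * 1 - (m * K / (N+1)) * (real (Suc n) * t^n) = m - (N*t/(N+1))^n * m"
      unfolding e1 e2 using Npos by (simp add: field_simps)
    show ?thesis using D unfolding EQ by (simp add: has_real_derivative_iff_has_vector_derivative)
  qed
  have HI: "((\<lambda>t. m - (N*t/(N+1))^n * m) has_integral (F ((N+1)/N) - F 0)) {0..(N+1)/N}"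
    by (rule fundamental_theorem_of_calculus) (use Npos d in auto)
  have kk: "K * ((N+1)/N)^n = 1" using Npos
    by (simp add: K_def power_mult_distrib[symmetric])
  have "F ((N+1)/N) - F 0 = m * ((N+1)/N) - (m / (N+1)) * (K * ((N+1)/N)^n) * ((N+1)/N)"
    by (simp add: F_def)
  also have "\<dots> = m" proof - have a: "(m/(N+1)) * ((N+1)/N) = m/N" using Npos by simp have b: "m*((N+1)/N) - m/N = m" using Npos by (simp add: field_simps) show ?thesis unfolding kk using a b Npos by simp qed
  finally have FF: "F ((N+1)/N) - F 0 = m" .
  show ?thesis using HI FF by simp
qed

lemma poly_int2:
  fixes N m :: real and n :: nat
  assumes N: "N = real n" "n \<ge> 1"
  shows "((\<lambda>t. (N*(1-t)/(N+1))^n * m) has_integral (m * (N/(N+1))^n / (N+1))) {0..1}"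
proof -
  define K where "K = (N/(N+1))^n"
  define F where "F t = - (m * K / (N+1)) * (1-t)^(Suc n)" for t
  have Npos: "N > 0" using N by simp
  have d: "(F has_vector_derivative ((N*(1-t)/(N+1))^n * m)) (at t within {0..1})" for t
  proof -
    have q: "((\<lambda>t. 1 - t) has_real_derivative 0 - 1) (at t within {0..1})"
      by (intro DERIV_diff DERIV_const DERIV_ident)
    have p: "((\<lambda>t. (1-t)^(Suc n)) has_real_derivative real (Suc n) * (1-t)^n * (0 - 1)) (at t within {0..1})"
      using DERIV_power_Suc[OF q, of n] by (simp add: algebra_simps)
    have D: "(F has_real_derivative - (m * K / (N+1)) * (real (Suc n) * (1-t)^n * (0 - 1))) (at t within {0..1})"
      unfolding F_def by (intro DERIV_cmult p)
    have e1: "(N*(1-t)/(N+1))^n = K * (1-t)^n"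
      by (simp add: K_def power_divide power_mult_distrib)
    have e2: "real (Suc n) = N + 1" using N by simp
    have EQ: "- (m * K / (N+1)) * (real (Suc n) * (1-t)^n * (0 - 1)) = (N*(1-t)/(N+1))^n * m"
      unfolding e1 e2 using Npos by (simp add: field_simps)
    show ?thesis using D unfolding EQ by (simp add: has_real_derivative_iff_has_vector_derivative)
  qed
  have "((\<lambda>t. (N*(1-t)/(N+1))^n * m) has_integral (F 1 - F 0)) {0..1}"
    by (rule fundamental_theorem_of_calculus) (use d in auto)
  moreover have "F 1 - F 0 = m * (N/(N+1))^n / (N+1)"
    using N by (simp add: F_def K_def)
  ultimately show ?thesis by simp
qed



theorem proposition3p4:
  fixes P :: "'a::euclidean_space set" and \<phi> :: "'a \<Rightarrow> real" and y :: 'a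
  assumes "bounded P" and "open P" and "convex P" and "P \<noteq> {}"
    and "\<phi> absolutely_integrable_on P" and "convex_on P \<phi>"
    and "y \<in> closure P"
    and "\<forall>a::real. -1 < a \<and> a < 1 / real DIM('a) \<longrightarrow>
           {x \<in> P. \<phi> x < a} =
           (\<lambda>p. ((1 - a * real DIM('a)) / (1 + real DIM('a))) *\<^sub>R y
                 + ((real DIM('a) * a + real DIM('a)) / (1 + real DIM('a))) *\<^sub>R p) ` P"
  shows "integral P \<phi> = 0 \<and> \<phi> \<in> extremizers P"
proof -
  define n where "n = DIM('a)"
  define N where "N = real n"
  have n1: "n \<ge> 1" unfolding n_def using DIM_positive by (simp add: Suc_le_eq)
  have Npos: "N > 0" using n1 by (simp add: N_def)
  have hyp: "\<And>a. -1 < a \<Longrightarrow> a < 1/N \<Longrightarrow> {x\<in>P. \<phi> x < a} =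
      (\<lambda>p. ((1 - a*N)/(1+N)) *\<^sub>R y + ((N*a+N)/(1+N)) *\<^sub>R p) ` P"
    using assms(8) by (simp add: N_def n_def)
  have hs: "{x\<in>P. \<phi> x < s*(N+1)/N - 1} = (\<lambda>p. (1-s) *\<^sub>R y + s *\<^sub>R p) ` P"
    if s: "0 < s" "s < 1" for s
  proof -
    define a where "a = s*(N+1)/N - 1"
    have a1: "-1 < a" using s Npos by (simp add: a_def)
    have a2: "a < 1/N"
    proof -
      have "s*(N+1) < 1*(N+1)" using s Npos by (intro mult_strict_right_mono) auto
      then have "s*(N+1)/N < (N+1)/N" using Npos by (simp add: divide_strict_right_mono)
      moreover have "(N+1)/N - 1 = 1/N" using Npos by (simp add: field_simps)
      ultimately show ?thesis unfolding a_def by linarith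
    qed
    have aN: "a*N = s*(N+1) - N" using Npos by (simp add: a_def left_diff_distrib)
    have "1 - a*N = (1-s)*(1+N)" unfolding aN by (simp add: algebra_simps)
    then have e1: "(1 - a*N)/(1+N) = 1-s" using Npos by simp
    have "N*a+N = s*(1+N)" using aN by (simp add: algebra_simps)
    then have e2: "(N*a+N)/(1+N) = s" using Npos by simp
    have "{x\<in>P. \<phi> x < a} = (\<lambda>p. (1-s) *\<^sub>R y + s *\<^sub>R p) ` P"
      using hyp[OF a1 a2] by (simp only: e1 e2)
    then show ?thesis by (simp add: a_def)
  qed
  have cont: "continuous_on P \<phi>" by (rule convex_on_continuous[OF assms(2) assms(6)])
  have upper: "\<phi> x < 1/N" if x: "x \<in> P" for x
  proof -
    obtain r where r: "r > 0" "ball x r \<subseteq> P" using assms(2) x open_contains_ball by blast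
    define c where "c = min (1/2) (r / (2*(norm (x-y)+1)))"
    have dpos: "0 < 2*(norm (x-y)+1)" by (simp add: add_nonneg_pos)
    have c0: "0 < c" "c \<le> 1/2" using r dpos unfolding c_def by (simp, linarith)
    have c1: "c * (2*(norm (x-y)+1)) \<le> r"
    proof -
      have "c \<le> r / (2*(norm (x-y)+1))" by (simp add: c_def)
      then show ?thesis by (simp add: field_simps add_pos_nonneg)
    qed
    define s where "s = 1 - c"
    have s0: "0 < s" "s < 1" "s \<ge> 1/2" using c0 by (auto simp: s_def)
    define p where "p = (1/s) *\<^sub>R (x - c *\<^sub>R y)"
    have sp: "s *\<^sub>R p = x - c *\<^sub>R y" using s0 by (simp add: p_def)
    have xeq: "x = (1-s) *\<^sub>R y + s *\<^sub>R p" using sp by (simp add: s_def)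
    have "s *\<^sub>R (p - x) = c *\<^sub>R (x - y)"
      using sp by (simp add: s_def algebra_simps)
    then have "s * norm (p - x) = c * norm (x - y)"
      using s0 c0 by (metis norm_scaleR abs_of_pos)
    then have "norm (p - x) = c * norm (x - y) / s" using s0 by (simp add: field_simps)
    also have "\<dots> \<le> 2 * c * norm (x - y)"
    proof -
      have "1/s \<le> 2" using s0 by (simp add: field_simps)
      then have "(c * norm (x - y)) * (1/s) \<le> (c * norm (x - y)) * 2"
        using c0 by (intro mult_left_mono) auto
      then show ?thesis by simp
    qed
    also have "\<dots> < r" using c0 c1 by (simp add: algebra_simps)
    finally have "p \<in> ball x r" by (simp add: dist_norm norm_minus_commute)
    then have "p \<in> P" using r by blast
    then have "x \<in> {x\<in>P. \<phi> x < s*(N+1)/N - 1}" using hs[OF s0(1,2)] xeq by blast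
    then have "\<phi> x < s*(N+1)/N - 1" by simp
    also have "\<dots> < 1/N"
    proof -
      have "s*(N+1) < 1*(N+1)" using s0 Npos by (intro mult_strict_right_mono) auto
      then have "s*(N+1)/N < (N+1)/N" using Npos by (simp add: divide_strict_right_mono)
      moreover have "(N+1)/N - 1 = 1/N" using Npos by (simp add: field_simps)
      ultimately show ?thesis by linarith
    qed
    finally show ?thesis .
  qed
  obtain B where B: "B > 0" "\<And>p. p \<in> P \<Longrightarrow> norm (p - y) \<le> B"
  proof -
    obtain B0 where B0: "B0 > 0" "\<And>p. p \<in> P \<Longrightarrow> norm p \<le> B0"
      using assms(1) bounded_pos by blast
    have "norm (p - y) \<le> B0 + norm y" if "p \<in> P" for p
      using B0(2)[OF that] norm_triangle_ineq4[of p y] by linarith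
    then show ?thesis using that[of "B0 + norm y"] B0(1) by (simp add: add_pos_nonneg)
  qed
  have lower1: "-1 \<le> \<phi> x" if x: "x \<in> P" "x \<noteq> y" for x
  proof (rule ccontr)
    assume neg: "\<not> -1 \<le> \<phi> x"
    have d0: "norm (x - y) > 0" using x by simp
    define s where "s = min (1/2) (norm (x-y) / (2*B))"
    have s0: "0 < s" "s < 1" using d0 B by (auto simp: s_def)
    have sB: "s * B \<le> norm (x - y) / 2"
    proof -
      have "s \<le> norm (x-y) / (2*B)" by (simp add: s_def)
      then show ?thesis using B(1) by (simp add: field_simps)
    qed
    have "0 < s*(N+1)/N" using s0 Npos by simp
    then have "\<phi> x < s*(N+1)/N - 1" using neg by linarith
    then have "x \<in> (\<lambda>p. (1-s) *\<^sub>R y + s *\<^sub>R p) ` P" using hs[OF s0] x by blast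
    then obtain p where p: "p \<in> P" "x = (1-s) *\<^sub>R y + s *\<^sub>R p" by blast
    have "x - y = s *\<^sub>R (p - y)" using p(2) by (simp add: algebra_simps)
    then have "norm (x - y) = s * norm (p - y)" using s0 by simp
    also have "\<dots> \<le> s * B" using B(2)[OF p(1)] s0 by (simp add: mult_left_mono)
    finally show False using sB d0 by linarith
  qed
  have lower: "-1 \<le> \<phi> x" if x: "x \<in> P" for x
  proof (cases "x = y")
    case False then show ?thesis using lower1 x by blast
  next
    case True
    show ?thesis
    proof (rule ccontr)
      assume neg: "\<not> -1 \<le> \<phi> x"
      have op: "open (P \<inter> \<phi> -` {..< -1})" by (rule continuous_open_preimage[OF cont assms(2)]) auto
      have "x \<in> P \<inter> \<phi> -` {..< -1}" using x neg by simp
      then obtain e where e: "e > 0" "ball x e \<subseteq> P \<inter> \<phi> -` {..< -1}"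
        using op open_contains_ball by blast
      obtain b :: 'a where b: "b \<in> Basis" using nonempty_Basis by blast
      define z where "z = x + (e/2) *\<^sub>R b"
      have "dist x z = e/2" using e b by (simp add: z_def dist_norm)
      then have "z \<in> ball x e" using e by simp
      then have z: "z \<in> P" "\<phi> z < -1" using e by auto
      have "z \<noteq> y" using e b True by (auto simp: z_def)
      then show False using lower1[OF z(1)] z(2) by simp
    qed
  qed
  have Pb: "P \<in> sets borel" using assms(2) by simp
  have Pm: "P \<in> lmeasurable" by (rule lmeasurable_open[OF assms(1,2)])
  define mP where "mP = measure lebesgue P"
  have mpos: "mP > 0"
  proof -
    obtain x where x: "x \<in> P" using assms(4) by blast
    obtain r where r: "r > 0" "ball x r \<subseteq> P" using assms(2) x open_contains_ball by blast
    have "0 < measure lborel (ball x r)" by (rule content_ball_pos[OF r(1)])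
    also have "measure lborel (ball x r) = measure lebesgue (ball x r)" by simp
    also have "\<dots> \<le> mP" unfolding mP_def
      by (rule measure_mono_fmeasurable[OF r(2) _ Pm]) simp
    finally show ?thesis .
  qed
  have Sopen: "open {x\<in>P. \<phi> x < a}" for a
  proof -
    have "{x\<in>P. \<phi> x < a} = P \<inter> \<phi> -` {..<a}" by auto
    then show ?thesis using continuous_open_preimage[OF cont assms(2), of "{..<a}"] by simp
  qed
  have Ssub: "{x\<in>P. \<phi> x < a} \<subseteq> P" for a by auto
  have Slm: "{x\<in>P. \<phi> x < a} \<in> lmeasurable" for a
    by (rule lmeasurable_open[OF bounded_subset[OF assms(1) Ssub] Sopen])
  have Smeas: "measure lebesgue {x\<in>P. \<phi> x < a} = (N*(a+1)/(N+1))^n * mP"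
    if a: "-1 < a" "a < 1/N" for a
  proof -
    define c where "c = (1 - a*N)/(1+N)"
    define sc where "sc = (N*a+N)/(1+N)"
    have sce: "sc = N*(a+1)/(N+1)" unfolding sc_def by (simp add: distrib_left add.commute)
    have sc0: "sc > 0" unfolding sce using a Npos by simp
    have fe: "(\<lambda>p. c *\<^sub>R y + sc *\<^sub>R p) = (\<lambda>x. sc *\<^sub>R x + c *\<^sub>R y)"
      by (rule ext) (rule add.commute)
    have "{x\<in>P. \<phi> x < a} = (\<lambda>x. sc *\<^sub>R x + c *\<^sub>R y) ` P"
      using hyp[OF a] unfolding c_def[symmetric] sc_def[symmetric] fe .
    then have "measure lebesgue {x\<in>P. \<phi> x < a} = \<bar>sc\<bar> ^ DIM('a) * mP"
      by (simp add: measure_lebesgue_affine mP_def)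
    moreover have "\<bar>sc\<bar> = sc" using sc0 by simp
    ultimately show ?thesis unfolding sce n_def by simp
  qed
  have lbS: "emeasure lborel A = ennreal (measure lebesgue A)" if "A \<in> sets borel" "A \<subseteq> P" for A
    by (rule lborel_emeasure_fin[OF that(1) bounded_subset[OF assms(1) that(2)]])
  have Pfin: "emeasure lebesgue P \<noteq> \<infinity>" using fmeasurableD2[OF Pm] by simp
  define f1 where "f1 x = indicator P x *\<^sub>R (\<phi> x + 1)" for x
  have f1m: "f1 \<in> borel_measurable borel" unfolding f1_def[abs_def]
    by (rule borel_measurable_continuous_on_indicator[OF Pb]) (intro continuous_intros cont)
  have f1nn: "0 \<le> f1 x" for x
  proof (cases "x \<in> P")
    case True then show ?thesis using lower[OF True] by (simp add: f1_def)
  qed (simp add: f1_def)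
  have key1: "emeasure lborel {x. t \<le> f1 x} * indicator {0<..} t =
      ennreal (mP - (N*t/(N+1))^n * mP) * indicator {0..(N+1)/N} t" if t0: "t \<noteq> 0" for t
  proof -
    consider "t < 0" | "0 < t" "t < (N+1)/N" | "(N+1)/N \<le> t" using t0 by linarith
    then show ?thesis
    proof cases
      case 1 then show ?thesis by (simp add: indicator_def)
    next
      case 2
      have se: "{x. t \<le> f1 x} = P - {x\<in>P. \<phi> x < t - 1}"
        using 2 by (auto simp: f1_def indicator_def)
      have a1: "-1 < t - 1" "t - 1 < 1/N" using 2 Npos by (auto simp: field_simps)
      have "measure lebesgue (P - {x\<in>P. \<phi> x < t - 1}) = mP - measure lebesgue {x\<in>P. \<phi> x < t - 1}"
        unfolding mP_def by (rule measure_Diff[OF Pfin]) (use Pm Slm in auto)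
      also have "\<dots> = mP - (N*t/(N+1))^n * mP" using Smeas[OF a1] by simp
      finally have "emeasure lborel {x. t \<le> f1 x} = ennreal (mP - (N*t/(N+1))^n * mP)"
        unfolding se using lbS[of "P - {x\<in>P. \<phi> x < t - 1}"] Pb Sopen[of "t-1"] by auto
      then show ?thesis using 2 by (simp add: indicator_def)
    next
      case 3
      have se: "{x. t \<le> f1 x} = {}"
      proof -
        have "f1 x < t" for x
        proof (cases "x \<in> P")
          case True
          then have "f1 x = \<phi> x + 1" by (simp add: f1_def)
          also have "\<dots> < 1/N + 1" using upper[OF True] by simp
          also have "1/N + 1 = (N+1)/N" using Npos by (simp add: field_simps)
          finally show ?thesis using 3 by simp
        next
          case False then show ?thesis using 3 Npos by (simp add: f1_def) (smt (verit) divide_pos_pos)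
        qed
        then show ?thesis by (auto simp: not_le[symmetric])
      qed
      show ?thesis
      proof (cases "t = (N+1)/N")
        case True
        then have h: "N*t/(N+1) = 1" using Npos by simp
        have "ennreal (mP - (N*t/(N+1))^n * mP) = 0" unfolding h by simp
        then show ?thesis unfolding se by simp
      next
        case False then show ?thesis using se 3 by (simp add: indicator_def)
      qed
    qed
  qed
  have I1: "(\<integral>\<^sup>+x. ennreal (f1 x) \<partial>lborel) = ennreal mP"
  proof -
    have "(\<integral>\<^sup>+x. ennreal (f1 x) \<partial>lborel) =
        (\<integral>\<^sup>+t. emeasure lborel {x. t \<le> f1 x} * indicator {0<..} t \<partial>(lborel::real measure))"
      by (rule layer_le[OF f1m f1nn])
    also have "\<dots> = (\<integral>\<^sup>+t. ennreal (mP - (N*t/(N+1))^n * mP) * indicator {0..(N+1)/N} t \<partial>lborel)"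
      by (rule nn_integral_cong_AE) (use AE_lborel_singleton[of "0::real"] key1 in auto)
    also have "\<dots> = ennreal mP"
    proof (rule nn_integral_has_integral_lebesgue'[OF _ poly_int1[OF N_def n1]])
      fix t assume t: "t \<in> {0..(N+1)/N}"
      have "N*t/(N+1) \<le> 1" using t Npos by (simp add: field_simps)
      moreover have "0 \<le> N*t/(N+1)" using t Npos by simp
      ultimately have "(N*t/(N+1))^n \<le> 1" by (rule power_le_one[rotated])
      then show "0 \<le> mP - (N*t/(N+1))^n * mP" using mpos
        by (metis diff_ge_0_iff_ge mult_left_le_one_le less_eq_real_def mult.commute mult_right_mono mult_1)
    qed
    finally show ?thesis .
  qed
  have phiI: "\<phi> integrable_on P" using assms(5) by (simp add: absolutely_integrable_on_def)
  have oneI: "((\<lambda>x. 1::real) has_integral mP) P"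
  proof -
    have "(\<lambda>x. 1::real) integrable_on P" using Pm lmeasurable_iff_integrable_on by blast
    then show ?thesis using lmeasure_integral[OF Pm] by (simp add: mP_def has_integral_integral)
  qed
  have HK1: "((\<lambda>x. \<phi> x + 1) has_integral (integral P \<phi> + mP)) P"
    by (rule has_integral_add[OF phiI[unfolded has_integral_integral] oneI])
  have "(\<integral>\<^sup>+x. ennreal (f1 x) \<partial>lborel) = (\<integral>\<^sup>+x. ennreal (\<phi> x + 1) * indicator P x \<partial>lborel)"
    by (intro nn_integral_cong) (simp add: f1_def indicator_def)
  also have "\<dots> = ennreal (integral P \<phi> + mP)"
    by (rule nn_integral_has_integral_lebesgue'[OF _ HK1]) (use lower in force)
  finally have "ennreal (integral P \<phi> + mP) = ennreal mP" using I1 by simp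
  moreover have "0 \<le> integral P \<phi> + mP"
    by (rule has_integral_nonneg[OF HK1]) (use lower in force)
  ultimately have int0: "integral P \<phi> = 0" using mpos by simp
  define f2 where "f2 x = indicator P x *\<^sub>R max 0 (- \<phi> x)" for x
  have f2m: "f2 \<in> borel_measurable borel" unfolding f2_def[abs_def]
    by (rule borel_measurable_continuous_on_indicator[OF Pb]) (intro continuous_intros cont)
  have f2nn: "0 \<le> f2 x" for x by (simp add: f2_def indicator_def)
  have key2: "emeasure lborel {x. t < f2 x} * indicator {0<..} t =
      ennreal ((N*(1-t)/(N+1))^n * mP) * indicator {0..1} t" if t0: "t \<noteq> 0" for t
  proof -
    consider "t < 0" | "0 < t" "t < 1" | "1 \<le> t" using t0 by linarith
    then show ?thesis
    proof cases
      case 1 then show ?thesis by (simp add: indicator_def)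
    next
      case 2
      have se: "{x. t < f2 x} = {x\<in>P. \<phi> x < -t}"
        using 2 by (auto simp: f2_def indicator_def max_def split: if_splits)
      have a1: "-1 < -t" "-t < 1/N" using 2 Npos by (auto simp: less_le_trans[of "-t" 0])
      have "N*(-t+1)/(N+1) = N*(1-t)/(N+1)" by simp
      then have "emeasure lborel {x. t < f2 x} = ennreal ((N*(1-t)/(N+1))^n * mP)"
        unfolding se using lbS[of "{x\<in>P. \<phi> x < -t}"] Sopen[of "-t"] Smeas[OF a1] by auto
      then show ?thesis using 2 by (simp add: indicator_def)
    next
      case 3
      have se: "{x. t < f2 x} = {}"
      proof -
        have "f2 x \<le> t" for x
          using lower[of x] 3 by (cases "x \<in> P") (auto simp: f2_def)
        then show ?thesis by (auto simp: not_less[symmetric])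
      qed
      show ?thesis
      proof (cases "t = 1")
        case True
        have z: "(N*(1-t)/(N+1))^n * mP = 0" using n1 True by (simp add: power_0_left)
        show ?thesis unfolding se z by simp
      next
        case False then show ?thesis using se 3 by (simp add: indicator_def)
      qed
    qed
  qed
  define K where "K = (N/(N+1))^n"
  have I2: "(\<integral>\<^sup>+x. ennreal (f2 x) \<partial>lborel) = ennreal (mP * K / (N+1))"
  proof -
    have "(\<integral>\<^sup>+x. ennreal (f2 x) \<partial>lborel) =
        (\<integral>\<^sup>+t. emeasure lborel {x. t < f2 x} * indicator {0<..} t \<partial>(lborel::real measure))"
      by (rule layer_lt[OF f2m f2nn])
    also have "\<dots> = (\<integral>\<^sup>+t. ennreal ((N*(1-t)/(N+1))^n * mP) * indicator {0..1} t \<partial>lborel)"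
      by (rule nn_integral_cong_AE) (use AE_lborel_singleton[of "0::real"] key2 in auto)
    also have "\<dots> = ennreal (mP * K / (N+1))" unfolding K_def
    proof (rule nn_integral_has_integral_lebesgue'[OF _ poly_int2[OF N_def n1]])
      fix t :: real assume t: "t \<in> {0..1}"
      then show "0 \<le> (N*(1-t)/(N+1))^n * mP" using Npos mpos by simp
    qed
    finally show ?thesis .
  qed
  have absI: "(\<lambda>x. \<bar>\<phi> x\<bar>) integrable_on P" using assms(5) by (simp add: absolutely_integrable_on_def)
  have HK2: "((\<lambda>x. max 0 (- \<phi> x)) has_integral ((1/2) * (integral P (\<lambda>x. \<bar>\<phi> x\<bar>) - integral P \<phi>))) P"
  proof -
    have "((\<lambda>x. (1/2) * (\<bar>\<phi> x\<bar> - \<phi> x)) has_integral ((1/2) * (integral P (\<lambda>x. \<bar>\<phi> x\<bar>) - integral P \<phi>))) P"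
      by (intro has_integral_mult_right has_integral_diff absI[unfolded has_integral_integral] phiI[unfolded has_integral_integral])
    moreover have "(\<lambda>x. (1/2) * (\<bar>\<phi> x\<bar> - \<phi> x)) = (\<lambda>x. max 0 (- \<phi> x))"
      by (auto simp: fun_eq_iff max_def abs_if)
    ultimately show ?thesis by simp
  qed
  have "(\<integral>\<^sup>+x. ennreal (f2 x) \<partial>lborel) = (\<integral>\<^sup>+x. ennreal (max 0 (- \<phi> x)) * indicator P x \<partial>lborel)"
    by (intro nn_integral_cong) (simp add: f2_def indicator_def)
  also have "\<dots> = ennreal ((1/2) * (integral P (\<lambda>x. \<bar>\<phi> x\<bar>) - integral P \<phi>))"
    by (rule nn_integral_has_integral_lebesgue'[OF _ HK2]) simp
  finally have "ennreal ((1/2) * (integral P (\<lambda>x. \<bar>\<phi> x\<bar>) - integral P \<phi>)) = ennreal (mP * K / (N+1))"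
    using I2 by simp
  moreover have "0 \<le> (1/2) * (integral P (\<lambda>x. \<bar>\<phi> x\<bar>) - integral P \<phi>)"
    by (rule has_integral_nonneg[OF HK2]) simp
  moreover have "0 \<le> mP * K / (N+1)" using mpos Npos by (simp add: K_def)
  ultimately have "(1/2) * (integral P (\<lambda>x. \<bar>\<phi> x\<bar>) - integral P \<phi>) = mP * K / (N+1)"
    by simp
  then have IA: "integral P (\<lambda>x. \<bar>\<phi> x\<bar>) = 2 * mP * K / (N+1)" using int0 by simp
  have Inf1: "Inf (\<phi> ` P) = -1"
  proof (rule cInf_eq_non_empty)
    show "\<phi> ` P \<noteq> {}" using assms(4) by simp
    show "\<And>x. x \<in> \<phi> ` P \<Longrightarrow> -1 \<le> x" using lower by auto
    fix z assume z: "\<And>x. x \<in> \<phi> ` P \<Longrightarrow> z \<le> x"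
    show "z \<le> -1"
    proof (rule ccontr)
      assume "\<not> z \<le> -1"
      define a where "a = (min z 0 - 1) / 2"
      have a0: "-1 < a" "a < 0" "a < z" using \<open>\<not> z \<le> -1\<close> by (auto simp: a_def min_def)
      have "0 < 1/N" using Npos by simp
      then have a1: "-1 < a" "a < 1/N" "a < z" using a0 by linarith+
      have "{x\<in>P. \<phi> x < a} \<noteq> {}" using hyp[OF a1(1,2)] assms(4) by simp
      then obtain x where "x \<in> P" "\<phi> x < a" by blast
      then show False using z[of "\<phi> x"] a1(3) by auto
    qed
  qed
  have dn: "real DIM('a) = N" "DIM('a) = n" by (simp_all add: N_def n_def)
  have eqW: "- (2 / (N + 1)) * (N / (N + 1)) ^ n * Inf (\<phi> ` P)
        = (1 / mP) * integral P (\<lambda>x. \<bar>\<phi> x\<bar>)"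
    unfolding Inf1 IA K_def using mpos by simp
  show ?thesis
    unfolding extremizers_def mem_Collect_eq dn(2) N_def[symmetric] mP_def[symmetric]
    using int0 assms(5,6) eqW by simp
qed
end
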